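(* Let $\rho:G\to GL(V)$ be a block representation with decomposition $V=W_k\supset\cdots\supset W_0=(0)$ and $K_j=\ker(G\to GL(V/W_j))$ with Lie algebras $\mathfrak k_j$, and let $m_j=\dim W_j-\dim W_{j-1}$. Choose a basis $\{w^{(j)}_i\}$ of $V$ such that $\{w^{(j)}_1,\dots,w^{(j)}_{m_j}\}$ is a complementary basis to $W_{j-1}$ in $W_j$ for each $j$, and a basis $\{v^{(j)}_i\}$ of $\mathfrak g$ such that $\{v^{(j)}_1,\dots,v^{(j)}_{m_j}\}$ is a complementary basis to $\mathfrak k_{j-1}$ in $\mathfrak k_j$ for each $j$. Order both bases first by $j$ and then by $i$. Then the coefficient matrix has block triangular form: e.g. if the vector fields $\xi_{v^{(j)}_i}$ form the columns, the rows are indexed by the basis of $V$, and descending order in $j$ is used, the matrix is lower block triangular with diagonal blocks $D_k,D_{k-1},\dots,D_1$, each $D_j$ an $m_j\times m_j$ matrix. Moreover $p_j=\det(D_j)$ are the relative coefficient determinants.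
   Context: For a rational representation of a connected complex linear algebraic group $G$ on $V$ with Lie algebra $\mathfrak g$, $\xi_v(x)=\frac{\partial}{\partial t}(\exp(tv)\cdot x)|_{t=0}$. The coefficient matrix w.r.t. bases $\{v_i\}$ of $\mathfrak g$ and $\{e_j\}$ of $V$ is $(a_{ji})$ with $\xi_{v_i}=\sum_j a_{ji}e_j$. Relative coefficient matrix: for a connected group $H$ acting on $U$ preserving $W$ with $\dim H=\dim W$ and acting trivially on $U/W$, the matrix $(a_{ji})$ with $\xi_{v_i}=\sum_j a_{ji}w_j$ (bases of $\mathrm{Lie}(H)$ and $W$); its determinant is the relative coefficient determinant. $H$ has a relatively open orbit in $W$ if some orbit's image under a linear projection $U\to W$ contains a nonempty Zariski open subset. Block representation: $\dim G=\dim V$ and $G$-invariant subspaces $V=W_k\supset\cdots\supset W_0=(0)$ with, for $K_j=\ker(G\to GL(V/W_j))$: $\dim K_j=\dim W_j$ for all $j$; the action of $K_j/K_{j-1}$ on $V/W_{j-1}$ has a relatively open orbit in $W_j/W_{j-1}$; and the relative coefficient determinants $p_j$ of $K_j/K_{j-1}$ on $W_j/W_{j-1}$ in $V/W_{j-1}$ (pulled back to $V$) are reduced and pairwise relatively prime in $\mathcal O_{V,0}$. *)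

theory Defs
  imports "HOL-Analysis.Analysis"
begin

text \<open>Vectors of V = C^n are elements of complex^'n; families of vectors / matrices
  (bases, images of Lie algebra basis elements) are indexed by nat.\<close>

definition cspan_idx :: "(nat \<Rightarrow> complex^'n) \<Rightarrow> nat set \<Rightarrow> (complex^'n) set" where
  "cspan_idx u I = {(\<Sum>i\<in>I. c i *s u i) | c. True}"

definition is_cbasis :: "(nat \<Rightarrow> complex^'n) \<Rightarrow> nat \<Rightarrow> bool" where
  "is_cbasis w n \<longleftrightarrow>
     (\<forall>c. (\<Sum>i<n. c i *s w i) = 0 \<longrightarrow> (\<forall>i<n. c i = 0)) \<and>
     (\<forall>y. \<exists>c. y = (\<Sum>i<n. c i *s w i))"

text \<open>Vector field xi_v(x) = d rho(v) x for v = sum c_i v_i, where A i = d rho(v_i).\<close>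
definition xi :: "(nat \<Rightarrow> complex^'n^'n) \<Rightarrow> nat \<Rightarrow> (nat \<Rightarrow> complex) \<Rightarrow> complex^'n \<Rightarrow> complex^'n" where
  "xi A n c x = (\<Sum>i<n. c i *s (A i *v x))"

definition coords :: "(nat \<Rightarrow> complex^'n) \<Rightarrow> nat \<Rightarrow> complex^'n \<Rightarrow> nat \<Rightarrow> complex" where
  "coords w n y = (THE c. (\<forall>l. n \<le> l \<longrightarrow> c l = 0) \<and> y = (\<Sum>l<n. c l *s w l))"

definition coeff_matrix :: "(nat \<Rightarrow> complex^'n) \<Rightarrow> (nat \<Rightarrow> complex^'n^'n) \<Rightarrow> nat
    \<Rightarrow> complex^'n \<Rightarrow> nat \<Rightarrow> nat \<Rightarrow> complex" where
  "coeff_matrix w A n x r i = coords w n (A i *v x) r"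

definition det_on :: "nat set \<Rightarrow> (nat \<Rightarrow> nat \<Rightarrow> complex) \<Rightarrow> complex" where
  "det_on S M = (\<Sum>p\<in>{p. p permutes S}. of_int (sign p) * (\<Prod>i\<in>S. M i (p i)))"

text \<open>Relative coefficient matrix: the classes of u t (t in S) form a basis of the
  quotient W/Wlow, and f i (i in S) are the vector fields on V of representatives of a
  basis of the Lie algebra of the quotient group; the induced field on V/Wlow at the class
  of x is the class of f i x, expanded in the quotient basis (pulled back to V).\<close>
definition rel_coeff_matrix :: "(complex^'n) set \<Rightarrow> (nat \<Rightarrow> complex^'n) \<Rightarrow> nat set
    \<Rightarrow> (nat \<Rightarrow> complex^'n \<Rightarrow> complex^'n) \<Rightarrow> complex^'n \<Rightarrow> nat \<Rightarrow> nat \<Rightarrow> complex" where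
  "rel_coeff_matrix Wlow u S f x l i =
     (THE c. (\<forall>t. t \<notin> S \<longrightarrow> c t = 0) \<and> f i x - (\<Sum>t\<in>S. c t *s u t) \<in> Wlow) l"

definition rel_coeff_det :: "(complex^'n) set \<Rightarrow> (nat \<Rightarrow> complex^'n) \<Rightarrow> nat set
    \<Rightarrow> (nat \<Rightarrow> complex^'n \<Rightarrow> complex^'n) \<Rightarrow> complex^'n \<Rightarrow> complex" where
  "rel_coeff_det Wlow u S f x = det_on S (rel_coeff_matrix Wlow u S f x)"

end

theory Submission
  imports Defs
begin

lemma indep_eq:
  assumes "is_cbasis w n" "(\<Sum>l<n. c l *s w l) = (\<Sum>l<n. c' l *s w l)" "l < n"
  shows "c l = c' l"
proof -
  have "(\<Sum>l<n. (c l - c' l) *s w l) = 0"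
    using assms(2) by (simp add: vector_sub_rdistrib sum_subtractf)
  moreover have ind: "\<forall>c. (\<Sum>i<n. c i *s w i) = 0 \<longrightarrow> (\<forall>i<n. c i = 0)"
    using assms(1) unfolding is_cbasis_def by (rule conjunct1)
  ultimately have "\<forall>i<n. c i - c' i = 0" using spec[OF ind, of "\<lambda>i. c i - c' i"] by simp
  thus ?thesis using assms(3) by simp
qed

lemma coords_eq:
  assumes "is_cbasis w n" "y = (\<Sum>l<n. g l *s w l)"
  shows "coords w n y = (\<lambda>l. if l < n then g l else 0)"
  unfolding coords_def
proof (rule the_equality)
  show "(\<forall>l. n \<le> l \<longrightarrow> (if l < n then g l else 0) = 0) \<and> y = (\<Sum>l<n. (if l < n then g l else 0) *s w l)"
    using assms(2) by simp
next
  fix c assume c: "(\<forall>l. n \<le> l \<longrightarrow> c l = 0) \<and> y = (\<Sum>l<n. c l *s w l)"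
  show "c = (\<lambda>l. if l < n then g l else 0)"
  proof
    fix l show "c l = (if l < n then g l else 0)"
      using c indep_eq[OF assms(1), of c g l] assms(2) by auto
  qed
qed

lemma sum_zero_outside:
  fixes n :: nat
  assumes "T \<subseteq> {..<n}" "\<And>l. l \<notin> T \<Longrightarrow> f l = (0::'a::comm_monoid_add)"
  shows "(\<Sum>l<n. f l) = (\<Sum>l\<in>T. f l)"
proof -
  have "sum f T = sum f {..<n}" by (rule sum.mono_neutral_left) (use assms in auto)
  then show ?thesis by simp
qed

lemma coords_span:
  assumes "is_cbasis w n" "y \<in> cspan_idx w {..<m}" "m \<le> n" "m \<le> l"
  shows "coords w n y l = 0"
proof -
  obtain c where y: "y = (\<Sum>i<m. c i *s w i)" using assms(2) unfolding cspan_idx_def by auto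
  have "y = (\<Sum>i<n. (if i < m then c i else 0) *s w i)"
    unfolding y by (subst sum_zero_outside[of "{..<m}"]) (use assms(3) in auto)
  from coords_eq[OF assms(1) this] assms(4) show ?thesis by simp
qed

lemma split_lt:
  assumes "(a::nat) \<le> b"
  shows "(\<Sum>l<b. f l) = (\<Sum>l<a. f l) + (\<Sum>l\<in>{a..<b}. f l)"
proof -
  have "{..<b} = {..<a} \<union> {a..<b}" using assms by auto
  moreover have "{..<a} \<inter> {a..<b} = {}" by auto
  ultimately show ?thesis by (simp add: sum.union_disjoint)
qed

theorem proposition2p5:
  fixes A :: "nat \<Rightarrow> complex^'n^'n"
    and w :: "nat \<Rightarrow> complex^'n"
    and W :: "nat \<Rightarrow> (complex^'n) set"
    and d :: "nat \<Rightarrow> nat"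
    and k n :: nat
  assumes dimV: "n = CARD('n)"
    and d0: "d 0 = 0" and dk: "d k = n" and dmono: "\<forall>j<k. d j \<le> d (Suc j)"
    and wbasis: "is_cbasis w n"
    and W_adapted: "\<forall>j\<le>k. W j = cspan_idx w {..<d j}"
    and W_invariant: "\<forall>j\<le>k. \<forall>i<n. \<forall>x\<in>W j. A i *v x \<in> W j"
    and lie_subalgebra: "\<forall>a<n. \<forall>b<n. \<exists>c. \<forall>x.
          A a *v (A b *v x) - A b *v (A a *v x) = (\<Sum>l<n. c l *s (A l *v x))"
    and kernels: "\<forall>j\<le>k. \<forall>c. (\<forall>x. xi A n c x \<in> W j) \<longleftrightarrow> (\<forall>i<n. d j \<le> i \<longrightarrow> c i = 0)"
  shows "(\<forall>x. \<forall>j\<in>{1..k}. \<forall>j'\<in>{1..k}. j' < j \<longrightarrow>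
           (\<forall>r\<in>{d (j - 1)..<d j}. \<forall>i\<in>{d (j' - 1)..<d j'}. coeff_matrix w A n x r i = 0))
         \<and> (\<forall>j\<in>{1..k}. \<forall>x. det_on {d (j - 1)..<d j} (coeff_matrix w A n x)
           = rel_coeff_det (W (j - 1)) w {d (j - 1)..<d j} (\<lambda>i y. A i *v y) x)"
proof -
  have dle0: "j \<le> k \<Longrightarrow> j' \<le> j \<Longrightarrow> d j' \<le> d j" for j j'
  proof (induction j arbitrary: j')
    case 0 then show ?case by simp
  next
    case (Suc j)
    have s: "d j \<le> d (Suc j)" using dmono Suc.prems(1) by simp
    show ?case
    proof (cases "j' = Suc j")
      case True then show ?thesis by simp
    next
      case False
      then have "j' \<le> j" using Suc.prems(2) by simp
      then have "d j' \<le> d j" using Suc.IH Suc.prems(1) by simp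
      then show ?thesis using s by (rule order.trans)
    qed
  qed
  have dle: "j' \<le> j \<Longrightarrow> j \<le> k \<Longrightarrow> d j' \<le> d j" for j j' using dle0[of j j'] by simp
  have dn: "j \<le> k \<Longrightarrow> d j \<le> n" for j using dle[of j k] dk by simp
  have inW: "A i *v x \<in> W j" if j: "j \<le> k" and i: "i < d j" for j i x
  proof -
    define c where "c = (\<lambda>l. if l = i then (1::complex) else 0)"
    have iff: "(\<forall>x. xi A n c x \<in> W j) \<longleftrightarrow> (\<forall>i'<n. d j \<le> i' \<longrightarrow> c i' = 0)"
      using spec[OF mp[OF spec[OF kernels, of j] j], of c] .
    have "\<forall>i'<n. d j \<le> i' \<longrightarrow> c i' = 0" using i by (simp add: c_def)
    with iff have all: "\<forall>x. xi A n c x \<in> W j" by (rule iffD2)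
    have "i < n" using dn[OF j] i by simp
    have "xi A n c x = (\<Sum>l<n. if l = i then A i *v x else 0)"
      unfolding xi_def by (rule sum.cong) (auto simp: c_def)
    also have "\<dots> = A i *v x" using \<open>i < n\<close> by simp
    finally show ?thesis using all by metis
  qed
  have part1: "\<forall>x. \<forall>j\<in>{1..k}. \<forall>j'\<in>{1..k}. j' < j \<longrightarrow>
           (\<forall>r\<in>{d (j - 1)..<d j}. \<forall>i\<in>{d (j' - 1)..<d j'}. coeff_matrix w A n x r i = 0)"
  proof (intro allI ballI impI)
    fix x j j' r i
    assume j: "j \<in> {1..k}" and j': "j' \<in> {1..k}" and lt: "j' < j"
      and r: "r \<in> {d (j - 1)..<d j}" and i: "i \<in> {d (j' - 1)..<d j'}"
    have djj: "d j' \<le> d (j - 1)" using dle[of j' "j - 1"] lt j by auto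
    have "A i *v x \<in> cspan_idx w {..<d j'}" using inW[of j' i x] j' i W_adapted by auto
    moreover have "d j' \<le> n" using dn j' by simp
    moreover have "d j' \<le> r" using r djj by simp
    ultimately show "coeff_matrix w A n x r i = 0"
      unfolding coeff_matrix_def by (rule coords_span[OF wbasis])
  qed
  have part2: "det_on {d (j - 1)..<d j} (coeff_matrix w A n x)
           = rel_coeff_det (W (j - 1)) w {d (j - 1)..<d j} (\<lambda>i y. A i *v y) x"
    if j: "j \<in> {1..k}" for j x
  proof -
    define a where "a = d (j - 1)"
    define b where "b = d j"
    define S where "S = {a..<b}"
    have ab: "a \<le> b" and bn: "b \<le> n" unfolding a_def b_def using dle[of "j - 1" j] dn[of j] j by auto
    have Wj1: "W (j - 1) = cspan_idx w {..<a}" using W_adapted j unfolding a_def by auto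
    have entry: "rel_coeff_matrix (W (j - 1)) w S (\<lambda>i y. A i *v y) x l i = coeff_matrix w A n x l i"
      if l: "l \<in> S" and i: "i \<in> S" for l i
    proof -
      define y where "y = A i *v x"
      define co where "co = coords w n y"
      obtain g where g: "y = (\<Sum>l<n. g l *s w l)" using wbasis unfolding is_cbasis_def by blast
      have co_eq: "co = (\<lambda>l. if l < n then g l else 0)" unfolding co_def using coords_eq[OF wbasis g] .
      have yco: "y = (\<Sum>l<n. co l *s w l)" unfolding g co_eq by simp
      have yW: "y \<in> cspan_idx w {..<b}" using inW[of j i x] j i W_adapted
        unfolding y_def b_def S_def by auto
      have co0: "co l = 0" if "b \<le> l" for l unfolding co_def using coords_span[OF wbasis yW bn that] .
      have yb: "y = (\<Sum>l<b. co l *s w l)"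
        unfolding yco by (rule sum_zero_outside) (use bn co0 in auto)
      define cc where "cc = (\<lambda>t. if t \<in> S then co t else 0)"
      have thef: "(THE c. (\<forall>t. t \<notin> S \<longrightarrow> c t = 0) \<and> y - (\<Sum>t\<in>S. c t *s w t) \<in> W (j - 1)) = cc"
      proof (rule the_equality)
        have "(\<Sum>t\<in>S. cc t *s w t) = (\<Sum>t\<in>S. co t *s w t)" unfolding cc_def by simp
        then have "y - (\<Sum>t\<in>S. cc t *s w t) = (\<Sum>l<a. co l *s w l)"
          using yb split_lt[OF ab, of "\<lambda>l. co l *s w l"] unfolding S_def by simp
        then have m1: "y - (\<Sum>t\<in>S. cc t *s w t) \<in> W (j - 1)"
          unfolding Wj1 cspan_idx_def mem_Collect_eq by (intro exI[of _ co] conjI) simp_all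
        have m2: "\<forall>t. t \<notin> S \<longrightarrow> cc t = 0" unfolding cc_def by simp
        show "(\<forall>t. t \<notin> S \<longrightarrow> cc t = 0) \<and> y - (\<Sum>t\<in>S. cc t *s w t) \<in> W (j - 1)"
          by (rule conjI[OF m2 m1])
      next
        fix c assume c: "(\<forall>t. t \<notin> S \<longrightarrow> c t = 0) \<and> y - (\<Sum>t\<in>S. c t *s w t) \<in> W (j - 1)"
        then have "y - (\<Sum>t\<in>S. c t *s w t) \<in> cspan_idx w {..<a}" using Wj1 by simp
        then obtain e where e: "y - (\<Sum>t\<in>S. c t *s w t) = (\<Sum>l<a. e l *s w l)"
          unfolding cspan_idx_def mem_Collect_eq by blast
        define h where "h = (\<lambda>l. if l < a then e l else if l \<in> S then c l else 0)"
        have "(\<Sum>l<n. h l *s w l) = (\<Sum>l<b. h l *s w l)"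
          by (rule sum_zero_outside) (use bn ab in \<open>auto simp: h_def S_def\<close>)
        also have "\<dots> = (\<Sum>l<a. h l *s w l) + (\<Sum>l\<in>S. h l *s w l)"
          unfolding S_def by (rule split_lt[OF ab])
        also have "(\<Sum>l<a. h l *s w l) = (\<Sum>l<a. e l *s w l)"
          by (rule sum.cong) (auto simp: h_def)
        also have "(\<Sum>l\<in>S. h l *s w l) = (\<Sum>l\<in>S. c l *s w l)"
          by (rule sum.cong) (auto simp: h_def S_def)
        finally have hs: "(\<Sum>l<n. h l *s w l) = (\<Sum>l<a. e l *s w l) + (\<Sum>l\<in>S. c l *s w l)" .
        have "y = (y - (\<Sum>t\<in>S. c t *s w t)) + (\<Sum>t\<in>S. c t *s w t)" by simp
        also have "\<dots> = (\<Sum>l<n. h l *s w l)" unfolding e hs ..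
        finally have "y = (\<Sum>l<n. h l *s w l)" .
        from coords_eq[OF wbasis this] have coh: "co = (\<lambda>l. if l < n then h l else 0)"
          unfolding co_def .
        show "c = cc"
        proof
          fix t show "c t = cc t"
          proof (cases "t \<in> S")
            case True
            then have "t < n" "\<not> t < a" using bn unfolding S_def by auto
            then show ?thesis using True coh unfolding cc_def h_def by simp
          next
            case False then show ?thesis using c unfolding cc_def by simp
          qed
        qed
      qed
      have "rel_coeff_matrix (W (j - 1)) w S (\<lambda>i y. A i *v y) x l i = cc l"
        unfolding rel_coeff_matrix_def y_def[symmetric] thef ..
      also have "\<dots> = coeff_matrix w A n x l i"
        unfolding cc_def coeff_matrix_def co_def y_def using l by simp
      finally show ?thesis .
    qed
    show ?thesis
      unfolding rel_coeff_det_def det_on_def a_def[symmetric] b_def[symmetric] S_def[symmetric]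
    proof (rule sum.cong[OF refl])
      fix p assume "p \<in> {p. p permutes S}"
      then have p: "p permutes S" by simp
      show "of_int (sign p) * (\<Prod>i\<in>S. coeff_matrix w A n x i (p i)) =
            of_int (sign p) * (\<Prod>i\<in>S. rel_coeff_matrix (W (j - 1)) w S (\<lambda>i y. A i *v y) x i (p i))"
      proof -
        have "(\<Prod>i\<in>S. coeff_matrix w A n x i (p i)) = (\<Prod>i\<in>S. rel_coeff_matrix (W (j - 1)) w S (\<lambda>i y. A i *v y) x i (p i))"
        proof (rule prod.cong[OF refl])
          fix i assume i: "i \<in> S"
          then have "p i \<in> S" using permutes_in_image[OF p] by simp
          then show "coeff_matrix w A n x i (p i) = rel_coeff_matrix (W (j - 1)) w S (\<lambda>i y. A i *v y) x i (p i)"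
            using entry[of i "p i"] i by simp
        qed
        then show ?thesis by simp
      qed
    qed
  qed
  show ?thesis
    apply (rule conjI)
     apply (rule part1)
    apply (intro ballI allI)
    apply (rule part2)
    apply assumption
    done
qed

end
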